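(* Let $(\mathcal C_n)_{n\in\mathbb N_0}$ be a sequence of $\sigma$-subfields with $\mathcal C_n\to\mathcal C_0$ strongly as $n\to\infty$. Let $I$ be an arbitrary index set and let $(\mathcal B_n^i)_{(n,i)\in\mathbb N_0\times I}$ be $\sigma$-subfields such that, for each $i\in I$, $\mathcal B_n^i\to\mathcal B_0^i$ weakly as $n\to\infty$, and such that, for each $n\in\mathbb N$, the family $(\mathcal B_n^i)_{i\in I}$ is conditionally independent given $\mathcal C_n$ (under $\mathbb P$). Then the family $(\mathcal B_0^i)_{i\in I}$ is conditionally independent given $\mathcal C_0$.
   Context: Let $(\Omega,\mathcal F,\mathbb P)$ be a (not necessarily complete) probability space and $\mathcal N:=\{F\in\mathcal F:\mathbb P(F)=0\}$. A $\sigma$-subfield is a sub-$\sigma$-field $\mathcal A\subset\mathcal F$ which is $\mathbb P$-complete, i.e. $\mathcal A=\sigma(\mathcal A\cup\mathcal N)$. For a $\sigma$-subfield $\mathcal A$ and integrable $f$, $\mathbb P_{\mathcal A}f:=\mathbb E^{\mathbb P}[f\mid\mathcal A]$. For $\sigma$-subfields $(\mathcal B_n)_{n\in\mathbb N_0}$: $\mathcal B_n\to\mathcal B_0$ weakly if $\mathbb P_{\mathcal B_n}\mathbb 1_A\to\mathbb 1_A$ in $\mathbb P$-probability for every $A\in\mathcal B_0$; $\mathcal B_n\to\mathcal B_0$ strongly if $\mathbb P_{\mathcal B_n}\mathbb 1_A\to\mathbb P_{\mathcal B_0}\mathbb 1_A$ in $\mathbb P$-probability for every $A\in\mathcal F$.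 *)

theory Defs
  imports "HOL-Probability.Probability"
begin

text \<open>A sigma-subfield: a sub-sigma-algebra of sets M that contains all P-null sets
  (equivalently, A = sigma(A \<union> N)).\<close>
definition sigma_subfield :: "'a measure \<Rightarrow> 'a set set \<Rightarrow> bool" where
  "sigma_subfield M A \<longleftrightarrow> sigma_algebra (space M) A \<and> A \<subseteq> sets M \<and> null_sets M \<subseteq> A"

definition cexp :: "'a measure \<Rightarrow> 'a set set \<Rightarrow> ('a \<Rightarrow> real) \<Rightarrow> ('a \<Rightarrow> real)" where
  "cexp M A f = real_cond_exp M (sigma (space M) A) f"

definition conv_in_prob :: "'a measure \<Rightarrow> (nat \<Rightarrow> 'a \<Rightarrow> real) \<Rightarrow> ('a \<Rightarrow> real) \<Rightarrow> bool" where
  "conv_in_prob M X Y \<longleftrightarrow>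
     (\<forall>e>0. (\<lambda>n. measure M {x \<in> space M. e < \<bar>X n x - Y x\<bar>}) \<longlonglongrightarrow> 0)"

definition sf_weak_conv :: "'a measure \<Rightarrow> (nat \<Rightarrow> 'a set set) \<Rightarrow> 'a set set \<Rightarrow> bool" where
  "sf_weak_conv M B B0 \<longleftrightarrow>
     (\<forall>A\<in>B0. conv_in_prob M (\<lambda>n. cexp M (B n) (indicator A)) (indicator A))"

definition sf_strong_conv :: "'a measure \<Rightarrow> (nat \<Rightarrow> 'a set set) \<Rightarrow> 'a set set \<Rightarrow> bool" where
  "sf_strong_conv M B B0 \<longleftrightarrow>
     (\<forall>A\<in>sets M. conv_in_prob M (\<lambda>n. cexp M (B n) (indicator A)) (cexp M B0 (indicator A)))"

definition cond_indep :: "'a measure \<Rightarrow> 'a set set \<Rightarrow> ('i \<Rightarrow> 'a set set) \<Rightarrow> 'i set \<Rightarrow> bool" where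
  "cond_indep M C B I \<longleftrightarrow>
     (\<forall>J A. finite J \<and> J \<noteq> {} \<and> J \<subseteq> I \<and> (\<forall>j\<in>J. A j \<in> B j) \<longrightarrow>
        (AE x in M. cexp M C (indicator (\<Inter>j\<in>J. A j)) x
                    = (\<Prod>j\<in>J. cexp M C (indicator (A j)) x)))"

end

theory Submission
  imports Defs
begin

lemma sf_sub:
  assumes P: "prob_space M" and G: "sigma_subfield M G"
  shows "finite_measure_subalgebra M (sigma (space M) G)"
    and "sets (sigma (space M) G) = G"
proof -
  have sa: "sigma_algebra (space M) G" "G \<subseteq> sets M" using G unfolding sigma_subfield_def by auto
  have pw: "G \<subseteq> Pow (space M)" using sa(1) by (simp add: sigma_algebra_iff2)
  show S: "sets (sigma (space M) G) = G"
    using pw sa(1) by (simp add: sets_measure_of sigma_algebra.sigma_sets_eq)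
  have "subalgebra M (sigma (space M) G)"
    unfolding subalgebra_def using S sa(2) pw by (simp add: space_measure_of_conv)
  then show "finite_measure_subalgebra M (sigma (space M) G)"
    unfolding finite_measure_subalgebra_def finite_measure_subalgebra_axioms_def
    using P by (simp add: prob_space_def)
qed

lemma sf_sfs:
  assumes P: "prob_space M" and G: "sigma_subfield M G"
  shows "sigma_finite_subalgebra M (sigma (space M) G)"
  using finite_measure_subalgebra_is_sigma_finite[OF sf_sub(1)[OF P G]] .

lemma cexp_meas [measurable]:
  "cexp M G f \<in> borel_measurable M"
  unfolding cexp_def by simp

lemma cexp_measG:
  assumes P: "prob_space M" and G: "sigma_subfield M G"
  shows "{x\<in>space M. c < cexp M G f x} \<in> G"
proof -
  have m: "cexp M G f \<in> borel_measurable (sigma (space M) G)"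
    unfolding cexp_def by simp
  have sp: "space (sigma (space M) G) = space M"
    using G unfolding sigma_subfield_def by (simp add: sigma_algebra_iff2 space_measure_of_conv)
  have "{x\<in>space (sigma (space M) G). c < cexp M G f x} \<in> sets (sigma (space M) G)"
    using m by measurable
  then show ?thesis using sp sf_sub(2)[OF P G] by simp
qed

lemma cexp_int:
  assumes P: "prob_space M" and G: "sigma_subfield M G" and f: "integrable M f"
  shows "integrable M (cexp M G f)" "(\<integral>x. cexp M G f x \<partial>M) = (\<integral>x. f x \<partial>M)"
  using sigma_finite_subalgebra.real_cond_exp_int[OF sf_sfs[OF P G] f] unfolding cexp_def by auto

lemma cexp_ind_bounds:
  assumes P: "prob_space M" and G: "sigma_subfield M G" and A: "A \<in> sets M"
  shows "AE x in M. 0 \<le> cexp M G (indicator A) x \<and> cexp M G (indicator A) x \<le> 1"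
proof -
  interpret prob_space M by (rule P)
  have i: "integrable M (indicator A :: 'a \<Rightarrow> real)"
    by (intro integrable_real_indicator A) (simp add: less_top[symmetric])
  have "AE x in M. cexp M G (indicator A) x \<ge> 0"
    using sigma_finite_subalgebra.real_cond_exp_ge_c[OF sf_sfs[OF P G] i, of 0] unfolding cexp_def by auto
  moreover have "AE x in M. cexp M G (indicator A) x \<le> 1"
    using sigma_finite_subalgebra.real_cond_exp_le_c[OF sf_sfs[OF P G] i, of 1] unfolding cexp_def
    by (auto simp: indicator_def)
  ultimately show ?thesis by auto
qed

lemma cexp_contr:
  assumes P: "prob_space M" and G: "sigma_subfield M G" and f: "integrable M f" and g: "integrable M g"
  shows "(\<integral>x. \<bar>cexp M G f x - cexp M G g x\<bar> \<partial>M) \<le> (\<integral>x. \<bar>f x - g x\<bar> \<partial>M)"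
proof -
  interpret S: sigma_finite_subalgebra M "sigma (space M) G" by (rule sf_sfs[OF P G])
  let ?E = "real_cond_exp M (sigma (space M) G)"
  have d: "integrable M (\<lambda>x. f x - g x)" using f g by simp
  have ad: "integrable M (\<lambda>x. \<bar>f x - g x\<bar>)" using d by simp
  have nd: "integrable M (\<lambda>x. - \<bar>f x - g x\<bar>)" using d by simp
  have e1: "AE x in M. ?E (\<lambda>x. f x - g x) x = ?E f x - ?E g x"
    using S.real_cond_exp_diff[OF f g] .
  have e2: "AE x in M. ?E (\<lambda>x. f x - g x) x \<le> ?E (\<lambda>x. \<bar>f x - g x\<bar>) x"
    by (rule S.real_cond_exp_mono[OF _ d ad]) auto
  have e3: "AE x in M. ?E (\<lambda>x. - \<bar>f x - g x\<bar>) x \<le> ?E (\<lambda>x. f x - g x) x"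
    by (rule S.real_cond_exp_mono[OF _ nd d]) auto
  have e4: "AE x in M. ?E (\<lambda>x. - \<bar>f x - g x\<bar>) x = - ?E (\<lambda>x. \<bar>f x - g x\<bar>) x"
    using S.real_cond_exp_cmult[OF ad, of "-1"] by simp
  have le: "AE x in M. \<bar>cexp M G f x - cexp M G g x\<bar> \<le> ?E (\<lambda>x. \<bar>f x - g x\<bar>) x"
    using e1 e2 e3 e4 unfolding cexp_def by eventually_elim auto
  have i1: "integrable M (\<lambda>x. \<bar>cexp M G f x - cexp M G g x\<bar>)"
    using cexp_int(1)[OF P G f] cexp_int(1)[OF P G g] by simp
  have "(\<integral>x. \<bar>cexp M G f x - cexp M G g x\<bar> \<partial>M) \<le> (\<integral>x. ?E (\<lambda>x. \<bar>f x - g x\<bar>) x \<partial>M)"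
    by (rule integral_mono_AE[OF i1 S.real_cond_exp_int(1)[OF ad] le])
  also have "\<dots> = (\<integral>x. \<bar>f x - g x\<bar> \<partial>M)" using S.real_cond_exp_int(2)[OF ad] .
  finally show ?thesis .
qed

lemma bint:
  fixes f :: "'a \<Rightarrow> real"
  assumes P: "prob_space M" and f: "f \<in> borel_measurable M" and b: "AE x in M. \<bar>f x\<bar> \<le> K"
  shows "integrable M f"
  using finite_measure.integrable_const_bound[of M f K] P b f by (simp add: prob_space_def)

lemma prod_diff_le:
  fixes a b :: "'j \<Rightarrow> real"
  assumes "finite J" and "\<forall>j\<in>J. 0 \<le> a j \<and> a j \<le> 1 \<and> 0 \<le> b j \<and> b j \<le> 1"
  shows "\<bar>(\<Prod>j\<in>J. a j) - (\<Prod>j\<in>J. b j)\<bar> \<le> (\<Sum>j\<in>J. \<bar>a j - b j\<bar>)"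
  using assms
proof (induction J rule: finite_induct)
  case empty then show ?case by simp
next
  case (insert x F)
  let ?P = "\<Prod>j\<in>F. a j" and ?Q = "\<Prod>j\<in>F. b j"
  have P01: "0 \<le> ?P" "?P \<le> 1" using insert.prems by (auto intro: prod_nonneg prod_le_1)
  have Q01: "0 \<le> ?Q" "?Q \<le> 1" using insert.prems by (auto intro: prod_nonneg prod_le_1)
  have ab: "0 \<le> a x" "a x \<le> 1" "0 \<le> b x" "b x \<le> 1" using insert.prems by auto
  have IH: "\<bar>?P - ?Q\<bar> \<le> (\<Sum>j\<in>F. \<bar>a j - b j\<bar>)" using insert by auto
  have "a x * ?P - b x * ?Q = (a x - b x) * ?P + b x * (?P - ?Q)" by (simp add: algebra_simps)
  then have "\<bar>a x * ?P - b x * ?Q\<bar> \<le> \<bar>a x - b x\<bar> * \<bar>?P\<bar> + \<bar>b x\<bar> * \<bar>?P - ?Q\<bar>"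
    by (metis abs_mult abs_triangle_ineq)
  also have "\<dots> \<le> \<bar>a x - b x\<bar> + \<bar>?P - ?Q\<bar>"
    using P01 ab by (intro add_mono mult_left_le mult_left_le_one_le) auto
  finally show ?case using IH insert.hyps by simp
qed

lemma inprob_L1:
  assumes P: "prob_space M" and X: "\<And>n. X n \<in> borel_measurable M" and Y: "Y \<in> borel_measurable M"
    and b: "\<And>n. AE x in M. \<bar>X n x - Y x\<bar> \<le> 2"
    and c: "conv_in_prob M X Y"
  shows "(\<lambda>n. \<integral>x. \<bar>X n x - Y x\<bar> \<partial>M) \<longlonglongrightarrow> 0"
proof -
  interpret prob_space M by (rule P)
  have key: "(\<integral>x. \<bar>X n x - Y x\<bar> \<partial>M) \<le> e + 2 * measure M {x \<in> space M. e < \<bar>X n x - Y x\<bar>}"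
    if e: "e > 0" for e n
  proof -
    let ?S = "{x \<in> space M. e < \<bar>X n x - Y x\<bar>}"
    have S: "?S \<in> sets M" using X Y by measurable
    have i1: "integrable M (\<lambda>x. \<bar>X n x - Y x\<bar>)"
      by (rule bint[OF P _ , of _ 2]) (use X Y b[of n] in auto)
    have i2: "integrable M (\<lambda>x. e + 2 * indicator ?S x :: real)"
      by (rule bint[OF P _ , of _ "e+2"]) (use S e in \<open>auto simp: indicator_def\<close>)
    have le: "AE x in M. \<bar>X n x - Y x\<bar> \<le> e + 2 * indicator ?S x"
      using b[of n] AE_space
    proof eventually_elim
      case (elim x)
      show ?case
      proof (cases "e < \<bar>X n x - Y x\<bar>")
        case True then show ?thesis using elim e by (simp add: indicator_def)
      next
        case False then show ?thesis using elim by (simp add: indicator_def)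
      qed
    qed
    have "(\<integral>x. \<bar>X n x - Y x\<bar> \<partial>M) \<le> (\<integral>x. e + 2 * indicator ?S x \<partial>M)"
      by (rule integral_mono_AE[OF i1 i2 le])
    also have "\<dots> = e + 2 * measure M ?S"
    proof -
      have i3: "integrable M (\<lambda>x. 2 * indicator ?S x :: real)"
        by (rule bint[OF P _ , of _ "2"]) (use S in \<open>auto simp: indicator_def\<close>)
      have "(\<integral>x. e + 2 * indicator ?S x \<partial>M) = (\<integral>x. e \<partial>M) + (\<integral>x. 2 * indicator ?S x \<partial>M)"
        by (rule Bochner_Integration.integral_add[OF integrable_const i3])
      also have "\<dots> = e + 2 * measure M ?S"
      proof -
        have "(\<integral>x. e \<partial>M) = e" using prob_space by simp
        moreover have "(\<integral>x. 2 * indicator ?S x \<partial>M) = 2 * (\<integral>x. indicator ?S x \<partial>M :: real)"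
          by (rule integral_mult_right_zero)
        moreover have "(\<integral>x. indicator ?S x \<partial>M) = (measure M ?S :: real)"
          using Bochner_Integration.integral_indicator[of M ?S] Int_absorb2[OF sets.sets_into_space[OF S]] by simp
        ultimately show ?thesis by (simp only:)
      qed
      finally show ?thesis .
    qed
    finally show ?thesis .
  qed
  show ?thesis
  proof (rule LIMSEQ_I)
    fix r :: real assume r: "r > 0"
    have "(\<lambda>n. measure M {x \<in> space M. r/2 < \<bar>X n x - Y x\<bar>}) \<longlonglongrightarrow> 0"
    proof -
      have r2: "r/2 > 0" using r by simp
      show ?thesis using c r2 unfolding conv_in_prob_def by blast
    qed
    have ev: "eventually (\<lambda>n. measure M {x \<in> space M. r/2 < \<bar>X n x - Y x\<bar>} < r/8) sequentially"
    proof -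
      have "(0::real) < r/8" using r by simp
      then show ?thesis using order_tendstoD(2)[OF \<open>_ \<longlonglongrightarrow> 0\<close>] by blast
    qed
    then obtain N where N: "\<And>n. n \<ge> N \<Longrightarrow> measure M {x \<in> space M. r/2 < \<bar>X n x - Y x\<bar>} < r/8"
      unfolding eventually_sequentially by blast
    show "\<exists>no. \<forall>n\<ge>no. norm ((\<integral>x. \<bar>X n x - Y x\<bar> \<partial>M) - 0) < r"
    proof (intro exI allI impI)
      fix n assume "N \<le> n"
      then have m: "measure M {x \<in> space M. r/2 < \<bar>X n x - Y x\<bar>} < r/8" using N by blast
      have "0 \<le> (\<integral>x. \<bar>X n x - Y x\<bar> \<partial>M)" by simp
      moreover have "(\<integral>x. \<bar>X n x - Y x\<bar> \<partial>M) < r" using key[of "r/2" n] m r by linarith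
      ultimately show "norm ((\<integral>x. \<bar>X n x - Y x\<bar> \<partial>M) - 0) < r" by simp
    qed
  qed
qed

lemma tri:
  fixes f g h :: "'a \<Rightarrow> real"
  assumes "integrable M f" "integrable M g" "integrable M h"
  shows "(\<integral>x. \<bar>f x - h x\<bar> \<partial>M) \<le> (\<integral>x. \<bar>f x - g x\<bar> \<partial>M) + (\<integral>x. \<bar>g x - h x\<bar> \<partial>M)"
proof -
  have i1: "integrable M (\<lambda>x. \<bar>f x - g x\<bar>)" "integrable M (\<lambda>x. \<bar>g x - h x\<bar>)" "integrable M (\<lambda>x. \<bar>f x - h x\<bar>)"
    using assms by auto
  have "(\<integral>x. \<bar>f x - h x\<bar> \<partial>M) \<le> (\<integral>x. \<bar>f x - g x\<bar> + \<bar>g x - h x\<bar> \<partial>M)"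
    by (rule integral_mono[OF i1(3)]) (use i1 in auto)
  also have "\<dots> = (\<integral>x. \<bar>f x - g x\<bar> \<partial>M) + (\<integral>x. \<bar>g x - h x\<bar> \<partial>M)"
    by (rule Bochner_Integration.integral_add[OF i1(1) i1(2)])
  finally show ?thesis .
qed

lemma ind_INT:
  assumes "finite J"
  shows "indicator (\<Inter>j\<in>J. X j) x = (\<Prod>j\<in>J. indicator (X j) x :: real)"
  using assms
proof (induction J rule: finite_induct)
  case empty then show ?case by simp
next
  case (insert a F)
  then show ?case by (simp add: indicator_inter_arith)
qed

lemma approx:
  assumes P: "prob_space M" and Gn: "\<And>n. sigma_subfield M (G n)" and A: "A \<in> sets M"
    and c: "conv_in_prob M (\<lambda>n. cexp M (G n) (indicator A)) (indicator A)"
  shows "(\<lambda>n. \<integral>x. \<bar>indicator {x\<in>space M. 1/2 < cexp M (G n) (indicator A) x} x - indicator A x\<bar> \<partial>M) \<longlonglongrightarrow> (0::real)"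
proof -
  interpret prob_space M by (rule P)
  define T where "T n = {x \<in> space M. 1/4 < \<bar>cexp M (G n) (indicator A) x - indicator A x\<bar>}" for n
  define S where "S n = {x\<in>space M. 1/2 < cexp M (G n) (indicator A) x}" for n
  have T: "T n \<in> sets M" for n unfolding T_def using A by measurable
  have S: "S n \<in> sets M" for n unfolding S_def by measurable
  have le: "(\<integral>x. \<bar>indicator (S n) x - indicator A x\<bar> \<partial>M) \<le> (measure M (T n) :: real)" for n
  proof -
    have i1: "integrable M (\<lambda>x. \<bar>indicator (S n) x - indicator A x :: real\<bar>)"
      by (rule bint[OF P _ , of _ 1]) (use S A in \<open>auto simp: indicator_def\<close>)
    have i2: "integrable M (indicator (T n) :: 'a \<Rightarrow> real)"
      by (rule bint[OF P _ , of _ 1]) (use T in \<open>auto simp: indicator_def\<close>)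
    have pw: "\<bar>indicator (S n) x - indicator A x :: real\<bar> \<le> indicator (T n) x" if x: "x \<in> space M" for x
    proof (cases "x \<in> S n \<longleftrightarrow> x \<in> A")
      case True then show ?thesis by (auto simp: indicator_def)
    next
      case False
      then have "x \<in> T n" using x unfolding S_def T_def by (auto simp: indicator_def)
      then show ?thesis by (auto simp: indicator_def)
    qed
    have "(\<integral>x. \<bar>indicator (S n) x - indicator A x\<bar> \<partial>M) \<le> (\<integral>x. indicator (T n) x \<partial>M :: real)"
      by (rule integral_mono[OF i1 i2 pw])
    also have "\<dots> = measure M (T n)"
      using Bochner_Integration.integral_indicator[of M "T n"] Int_absorb2[OF sets.sets_into_space[OF T]] by simp
    finally show ?thesis .
  qed
  have lim: "(\<lambda>n. measure M (T n)) \<longlonglongrightarrow> 0"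
  proof -
    have "(1/4::real) > 0" by simp
    then show ?thesis using c unfolding conv_in_prob_def T_def by blast
  qed
  have "(\<lambda>n. \<integral>x. \<bar>indicator (S n) x - indicator A x\<bar> \<partial>M) \<longlonglongrightarrow> (0::real)"
    by (rule tendsto_sandwich[OF _ _ tendsto_const lim]) (use le in auto)
  then show ?thesis unfolding S_def .
qed

theorem proposition3p1:
  fixes M :: "'a measure" and C :: "nat \<Rightarrow> 'a set set"
    and B :: "nat \<Rightarrow> 'i \<Rightarrow> 'a set set" and I :: "'i set"
  assumes "prob_space M"
    and "\<forall>n. sigma_subfield M (C n)"
    and "\<forall>n. \<forall>i\<in>I. sigma_subfield M (B n i)"
    and "sf_strong_conv M C (C 0)"
    and "\<forall>i\<in>I. sf_weak_conv M (\<lambda>n. B n i) (B 0 i)"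
    and "\<forall>n\<ge>1. cond_indep M (C n) (\<lambda>i. B n i) I"
  shows "cond_indep M (C 0) (\<lambda>i. B 0 i) I"
proof -
  note P = assms(1)
  interpret prob_space M by (rule P)
  have Cs: "\<And>n. sigma_subfield M (C n)" using assms(2) by blast
  have Bs: "\<And>n i. i \<in> I \<Longrightarrow> sigma_subfield M (B n i)" using assms(3) by blast
  show ?thesis unfolding cond_indep_def
  proof (intro allI impI)
    fix J and A :: "'i \<Rightarrow> 'a set"
    assume H: "finite J \<and> J \<noteq> {} \<and> J \<subseteq> I \<and> (\<forall>j\<in>J. A j \<in> B 0 j)"
    then have fJ: "finite J" and nJ: "J \<noteq> {}" and JI: "J \<subseteq> I" and AB: "\<And>j. j \<in> J \<Longrightarrow> A j \<in> B 0 j"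
      by auto
    have AM: "A j \<in> sets M" if "j \<in> J" for j
      using Bs[of j 0] AB[OF that] JI that unfolding sigma_subfield_def by auto
    define S where "S n j = {x\<in>space M. 1/2 < cexp M (B n j) (indicator (A j)) x}" for n j
    have SB: "S n j \<in> B n j" if "j \<in> J" for n j
      unfolding S_def using cexp_measG[OF P Bs, of j "1/2"] that JI by blast
    have SM: "S n j \<in> sets M" if "j \<in> J" for n j
      using Bs[of j n] SB[OF that] JI that unfolding sigma_subfield_def by auto
    define AI where "AI = (\<Inter>j\<in>J. A j)"
    define SI where "SI n = (\<Inter>j\<in>J. S n j)" for n
    have AIM: "AI \<in> sets M" unfolding AI_def using fJ nJ AM by auto
    have SIM: "SI n \<in> sets M" for n unfolding SI_def using fJ nJ SM by auto
    have ii: "integrable M (indicator X :: 'a \<Rightarrow> real)" if "X \<in> sets M" for X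
      by (rule bint[OF P _ , of _ 1]) (use that in \<open>auto simp: indicator_def\<close>)
    have ci: "integrable M (cexp M G (indicator X))" if "X \<in> sets M" "sigma_subfield M G" for X G
      using cexp_int(1)[OF P that(2) ii[OF that(1)]] .
    have cb: "AE x in M. 0 \<le> cexp M G (indicator X) x \<and> cexp M G (indicator X) x \<le> 1"
      if "X \<in> sets M" "sigma_subfield M G" for X G
      using cexp_ind_bounds[OF P that(2) that(1)] .
    define u where "u n = (\<Sum>j\<in>J. \<integral>x. \<bar>indicator (S n j) x - indicator (A j) x\<bar> \<partial>M :: real)" for n
    define v where "v n = (\<Sum>j\<in>J. \<integral>x. \<bar>cexp M (C n) (indicator (A j)) x - cexp M (C 0) (indicator (A j)) x\<bar> \<partial>M)" for n
    define w where "w n = (\<integral>x. \<bar>cexp M (C n) (indicator AI) x - cexp M (C 0) (indicator AI) x\<bar> \<partial>M)" for n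
    have L1_of_strong: "(\<lambda>n. \<integral>x. \<bar>cexp M (C n) (indicator X) x - cexp M (C 0) (indicator X) x\<bar> \<partial>M) \<longlonglongrightarrow> 0"
      if X: "X \<in> sets M" for X
    proof (rule inprob_L1[OF P])
      show "\<And>n. AE x in M. \<bar>cexp M (C n) (indicator X) x - cexp M (C 0) (indicator X) x\<bar> \<le> 2"
      proof -
        fix n
        show "AE x in M. \<bar>cexp M (C n) (indicator X) x - cexp M (C 0) (indicator X) x\<bar> \<le> 2"
          using cb[OF X Cs[of n]] cb[OF X Cs[of 0]] by eventually_elim auto
      qed
      show "conv_in_prob M (\<lambda>n. cexp M (C n) (indicator X)) (cexp M (C 0) (indicator X))"
        using assms(4) X unfolding sf_strong_conv_def by blast
    qed simp_all
    have ulim: "u \<longlonglongrightarrow> 0" unfolding u_def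
    proof (rule tendsto_null_sum)
      fix j assume j: "j \<in> J"
      have c: "conv_in_prob M (\<lambda>n. cexp M (B n j) (indicator (A j))) (indicator (A j))"
        using assms(5) JI j AB[OF j] unfolding sf_weak_conv_def by blast
      show "(\<lambda>n. \<integral>x. \<bar>indicator (S n j) x - indicator (A j) x\<bar> \<partial>M :: real) \<longlonglongrightarrow> 0"
        unfolding S_def using approx[OF P Bs AM[OF j] c] JI j by blast
    qed
    have vlim: "v \<longlonglongrightarrow> 0" unfolding v_def
      by (rule tendsto_null_sum) (rule L1_of_strong[OF AM])
    have wlim: "w \<longlonglongrightarrow> 0" unfolding w_def by (rule L1_of_strong[OF AIM])
    define P0 where "P0 = cexp M (C 0) (indicator AI)"
    define Q0 where "Q0 = (\<lambda>x. \<Prod>j\<in>J. cexp M (C 0) (indicator (A j)) x)"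
    have iP0: "integrable M P0" unfolding P0_def using ci[OF AIM Cs] .
    have Q0b: "AE x in M. \<forall>j\<in>J. 0 \<le> cexp M (C 0) (indicator (A j)) x \<and> cexp M (C 0) (indicator (A j)) x \<le> 1"
      using fJ by (intro AE_finite_allI) (use cb[OF AM Cs] in auto)
    have iQ0: "integrable M Q0"
    proof (rule bint[OF P _, of _ 1])
      show "Q0 \<in> borel_measurable M" unfolding Q0_def by measurable
      show "AE x in M. \<bar>Q0 x\<bar> \<le> 1" using Q0b
        
      proof eventually_elim
        case (elim x)
        have "0 \<le> Q0 x" "Q0 x \<le> 1" unfolding Q0_def using elim by (auto intro: prod_nonneg prod_le_1)
        then show ?case by simp
      qed
    qed
    have bound: "(\<integral>x. \<bar>P0 x - Q0 x\<bar> \<partial>M) \<le> w n + 2 * u n + v n" if n: "n \<ge> 1" for n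
    proof -
      define Pn where "Pn = cexp M (C n) (indicator AI)"
      define Pn' where "Pn' = cexp M (C n) (indicator (SI n))"
      define Qn' where "Qn' = (\<lambda>x. \<Prod>j\<in>J. cexp M (C n) (indicator (S n j)) x)"
      have iPn: "integrable M Pn" unfolding Pn_def using ci[OF AIM Cs] .
      have iPn': "integrable M Pn'" unfolding Pn'_def using ci[OF SIM Cs] .
      have Qnb: "AE x in M. \<forall>j\<in>J. 0 \<le> cexp M (C n) (indicator (S n j)) x \<and> cexp M (C n) (indicator (S n j)) x \<le> 1"
        using fJ by (intro AE_finite_allI) (use cb[OF SM Cs] in auto)
      have iQn': "integrable M Qn'"
      proof (rule bint[OF P _, of _ 1])
        show "Qn' \<in> borel_measurable M" unfolding Qn'_def by measurable
        show "AE x in M. \<bar>Qn' x\<bar> \<le> 1" using Qnb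
          
      proof eventually_elim
        case (elim x)
        have "0 \<le> Qn' x" "Qn' x \<le> 1" unfolding Qn'_def using elim by (auto intro: prod_nonneg prod_le_1)
        then show ?case by simp
      qed
      qed
      have "(\<integral>x. \<bar>P0 x - Q0 x\<bar> \<partial>M) \<le> (\<integral>x. \<bar>P0 x - Pn x\<bar> \<partial>M) + (\<integral>x. \<bar>Pn x - Q0 x\<bar> \<partial>M)"
        by (rule tri[OF iP0 iPn iQ0])
      also have "(\<integral>x. \<bar>Pn x - Q0 x\<bar> \<partial>M) \<le> (\<integral>x. \<bar>Pn x - Pn' x\<bar> \<partial>M) + (\<integral>x. \<bar>Pn' x - Q0 x\<bar> \<partial>M)"
        by (rule tri[OF iPn iPn' iQ0])
      also have "(\<integral>x. \<bar>Pn' x - Q0 x\<bar> \<partial>M) \<le> (\<integral>x. \<bar>Pn' x - Qn' x\<bar> \<partial>M) + (\<integral>x. \<bar>Qn' x - Q0 x\<bar> \<partial>M)"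
        by (rule tri[OF iPn' iQn' iQ0])
      finally have T: "(\<integral>x. \<bar>P0 x - Q0 x\<bar> \<partial>M) \<le> (\<integral>x. \<bar>P0 x - Pn x\<bar> \<partial>M) + ((\<integral>x. \<bar>Pn x - Pn' x\<bar> \<partial>M) + ((\<integral>x. \<bar>Pn' x - Qn' x\<bar> \<partial>M) + (\<integral>x. \<bar>Qn' x - Q0 x\<bar> \<partial>M)))"
        by simp
      have B1: "(\<integral>x. \<bar>P0 x - Pn x\<bar> \<partial>M) = w n"
        unfolding w_def P0_def Pn_def by (simp add: abs_minus_commute)
      have B2: "(\<integral>x. \<bar>Pn x - Pn' x\<bar> \<partial>M) \<le> u n"
      proof -
        have "(\<integral>x. \<bar>Pn x - Pn' x\<bar> \<partial>M) \<le> (\<integral>x. \<bar>indicator AI x - indicator (SI n) x\<bar> \<partial>M)"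
          unfolding Pn_def Pn'_def by (rule cexp_contr[OF P Cs ii[OF AIM] ii[OF SIM]])
        also have "\<dots> \<le> (\<integral>x. (\<Sum>j\<in>J. \<bar>indicator (S n j) x - indicator (A j) x\<bar>) \<partial>M)"
        proof (rule integral_mono)
          show "integrable M (\<lambda>x. \<bar>indicator AI x - indicator (SI n) x :: real\<bar>)"
            using ii[OF AIM] ii[OF SIM] by auto
          show "integrable M (\<lambda>x. \<Sum>j\<in>J. \<bar>indicator (S n j) x - indicator (A j) x :: real\<bar>)"
            using ii[OF SM] ii[OF AM] by (intro Bochner_Integration.integrable_sum) auto
          fix x
          have "\<bar>indicator AI x - indicator (SI n) x :: real\<bar> = \<bar>(\<Prod>j\<in>J. indicator (S n j) x) - (\<Prod>j\<in>J. indicator (A j) x :: real)\<bar>"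
            unfolding AI_def SI_def ind_INT[OF fJ] by (simp add: abs_minus_commute)
          also have "\<dots> \<le> (\<Sum>j\<in>J. \<bar>indicator (S n j) x - indicator (A j) x\<bar>)"
            by (rule prod_diff_le[OF fJ]) (auto simp: indicator_def)
          finally show "\<bar>indicator AI x - indicator (SI n) x :: real\<bar> \<le> (\<Sum>j\<in>J. \<bar>indicator (S n j) x - indicator (A j) x\<bar>)" .
        qed
        also have "\<dots> = u n"
          unfolding u_def using ii[OF SM] ii[OF AM] by (intro Bochner_Integration.integral_sum) auto
        finally show ?thesis .
      qed
      have B3: "(\<integral>x. \<bar>Pn' x - Qn' x\<bar> \<partial>M) = 0"
      proof -
        have ci: "cond_indep M (C n) (\<lambda>i. B n i) I" using assms(6) n by blast
        have "AE x in M. Pn' x = Qn' x"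
          using ci fJ nJ JI SB unfolding cond_indep_def Pn'_def Qn'_def SI_def by blast
        then have "AE x in M. \<bar>Pn' x - Qn' x\<bar> = 0" by eventually_elim simp
        then have "(\<integral>x. \<bar>Pn' x - Qn' x\<bar> \<partial>M) = (\<integral>x. 0 \<partial>M)"
          by (intro integral_cong_AE) (use iPn' iQn' in auto)
        then show ?thesis by simp
      qed
      have B4: "(\<integral>x. \<bar>Qn' x - Q0 x\<bar> \<partial>M) \<le> u n + v n"
      proof -
        let ?a = "\<lambda>j x. cexp M (C n) (indicator (S n j)) x"
        let ?m = "\<lambda>j x. cexp M (C n) (indicator (A j)) x"
        let ?b = "\<lambda>j x. cexp M (C 0) (indicator (A j)) x"
        have ia: "integrable M (?a j)" if "j \<in> J" for j using ci[OF SM[OF that] Cs] .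
        have im: "integrable M (?m j)" if "j \<in> J" for j using ci[OF AM[OF that] Cs] .
        have ib: "integrable M (?b j)" if "j \<in> J" for j using ci[OF AM[OF that] Cs] .
        have "(\<integral>x. \<bar>Qn' x - Q0 x\<bar> \<partial>M) \<le> (\<integral>x. (\<Sum>j\<in>J. \<bar>?a j x - ?b j x\<bar>) \<partial>M)"
        proof (rule integral_mono_AE)
          show "integrable M (\<lambda>x. \<bar>Qn' x - Q0 x\<bar>)" using iQn' iQ0 by auto
          show "integrable M (\<lambda>x. \<Sum>j\<in>J. \<bar>?a j x - ?b j x\<bar>)"
            using ia ib by (intro Bochner_Integration.integrable_sum) auto
          show "AE x in M. \<bar>Qn' x - Q0 x\<bar> \<le> (\<Sum>j\<in>J. \<bar>?a j x - ?b j x\<bar>)"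
            using Qnb Q0b
          proof eventually_elim
            case (elim x)
            show ?case unfolding Qn'_def Q0_def
              by (rule prod_diff_le[OF fJ]) (use elim in auto)
          qed
        qed
        also have "\<dots> = (\<Sum>j\<in>J. \<integral>x. \<bar>?a j x - ?b j x\<bar> \<partial>M)"
          using ia ib by (intro Bochner_Integration.integral_sum) auto
        also have "\<dots> \<le> (\<Sum>j\<in>J. (\<integral>x. \<bar>indicator (S n j) x - indicator (A j) x\<bar> \<partial>M :: real) + (\<integral>x. \<bar>?m j x - ?b j x\<bar> \<partial>M))"
        proof (rule sum_mono)
          fix j assume j: "j \<in> J"
          have "(\<integral>x. \<bar>?a j x - ?b j x\<bar> \<partial>M) \<le> (\<integral>x. \<bar>?a j x - ?m j x\<bar> \<partial>M) + (\<integral>x. \<bar>?m j x - ?b j x\<bar> \<partial>M)"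
            by (rule tri[OF ia[OF j] im[OF j] ib[OF j]])
          moreover have "(\<integral>x. \<bar>?a j x - ?m j x\<bar> \<partial>M) \<le> (\<integral>x. \<bar>indicator (S n j) x - indicator (A j) x\<bar> \<partial>M)"
            by (rule cexp_contr[OF P Cs ii[OF SM[OF j]] ii[OF AM[OF j]]])
          ultimately show "(\<integral>x. \<bar>?a j x - ?b j x\<bar> \<partial>M) \<le> (\<integral>x. \<bar>indicator (S n j) x - indicator (A j) x\<bar> \<partial>M :: real) + (\<integral>x. \<bar>?m j x - ?b j x\<bar> \<partial>M)"
            by linarith
        qed
        also have "\<dots> = u n + v n" unfolding u_def v_def by (simp add: sum.distrib)
        finally show ?thesis .
      qed
      show ?thesis using T B1 B2 B3 B4 by linarith
    qed
    have Rlim: "(\<lambda>n. w n + 2 * u n + v n) \<longlonglongrightarrow> 0"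
      using tendsto_add[OF tendsto_add[OF wlim tendsto_mult_left[OF ulim, of 2]] vlim] by simp
    have D0: "(\<integral>x. \<bar>P0 x - Q0 x\<bar> \<partial>M) \<le> 0"
    proof (rule tendsto_le[OF trivial_limit_sequentially Rlim tendsto_const])
      show "\<forall>\<^sub>F n in sequentially. (\<integral>x. \<bar>P0 x - Q0 x\<bar> \<partial>M) \<le> w n + 2 * u n + v n"
        unfolding eventually_sequentially using bound by blast
    qed
    have iD: "integrable M (\<lambda>x. \<bar>P0 x - Q0 x\<bar>)" using iP0 iQ0 by auto
    have "(\<integral>x. \<bar>P0 x - Q0 x\<bar> \<partial>M) = 0" using D0 by (simp add: antisym)
    then have "AE x in M. \<bar>P0 x - Q0 x\<bar> = 0"
      using integral_nonneg_eq_0_iff_AE[OF iD] by simp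
    then show "AE x in M. cexp M (C 0) (indicator (\<Inter>j\<in>J. A j)) x = (\<Prod>j\<in>J. cexp M (C 0) (indicator (A j)) x)"
      by eventually_elim (simp add: P0_def Q0_def AI_def)
  qed
qed

end
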